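(* Let $d\ge2$ and $R>0$, and let $P\subseteq R\mathbb{B}_2^d$ be a simple bounded polytope containing the origin in its interior, with polar $P^\circ=\{y:\langle x,y\rangle\le1\ \forall x\in P\}$. Suppose every facet of $P^\circ$ has Euclidean diameter at most $\gamma>0$. Then for every $c\in\mathbb{S}^{d-1}$, every vertex $v^+$ of $P$ maximizing $c^\top x$ and every vertex $v^-$ of $P$ minimizing $c^\top x$, there is no simplex path from $v^+$ to $v^-$ of length less than $(d-1)\big(\frac{2}{R\gamma}-2\big)$.
   Context: Write $P=\{x: a_j^\top x\le 1,\ j\in[n]\}$ as a minimal inequality description. A simplex path of length $k$ from $v^+$ to $v^-$ is a sequence $B^0,\dots,B^k\in\binom{[n]}{d}$ of feasible bases of $P$ (index sets whose constraints are tight at a vertex of $P$ and linearly independent) with $|B^{i-1}\cap B^i|=d-1$ for all $i$, such that $a_j^\top v^+=1$ for all $j\in B^0$ and $a_j^\top v^-=1$ for all $j\in B^k$. Simple means every vertex lies on exactly $d$ facets. *)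

theory Defs
  imports "HOL-Analysis.Analysis"
begin

definition polyP :: "(nat \<Rightarrow> real^'d) \<Rightarrow> nat \<Rightarrow> (real^'d) set" where
  "polyP a n = {x. \<forall>j<n. a j \<bullet> x \<le> 1}"

definition minimal_description :: "(nat \<Rightarrow> real^'d) \<Rightarrow> nat \<Rightarrow> bool" where
  "minimal_description a n \<longleftrightarrow>
     (\<forall>j<n. {x. \<forall>i<n. i \<noteq> j \<longrightarrow> a i \<bullet> x \<le> 1} \<noteq> polyP a n)"

definition polar :: "(real^'d) set \<Rightarrow> (real^'d) set" where
  "polar S = {y. \<forall>x\<in>S. x \<bullet> y \<le> 1}"

definition simple_polytope :: "(real^'d) set \<Rightarrow> bool" where
  "simple_polytope S \<longleftrightarrow>
     (\<forall>v. v extreme_point_of S \<longrightarrow> card {F. F facet_of S \<and> v \<in> F} = CARD('d))"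

definition feasible_basis :: "(nat \<Rightarrow> real^'d) \<Rightarrow> nat \<Rightarrow> nat set \<Rightarrow> bool" where
  "feasible_basis a n B \<longleftrightarrow>
     B \<subseteq> {..<n} \<and> card B = CARD('d) \<and> inj_on a B \<and> independent (a ` B) \<and>
     (\<exists>v. v extreme_point_of polyP a n \<and> (\<forall>j\<in>B. a j \<bullet> v = 1))"

text \<open>A simplex path B^0,...,B^k (a list of length k+1) from vp to vm; its length is k.\<close>
definition simplex_path ::
  "(nat \<Rightarrow> real^'d) \<Rightarrow> nat \<Rightarrow> real^'d \<Rightarrow> real^'d \<Rightarrow> nat set list \<Rightarrow> bool" where
  "simplex_path a n vp vm Bs \<longleftrightarrow>
     Bs \<noteq> [] \<and>
     (\<forall>i<length Bs. feasible_basis a n (Bs ! i)) \<and>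
     (\<forall>i. 0 < i \<and> i < length Bs \<longrightarrow> card (Bs ! (i - 1) \<inter> Bs ! i) = CARD('d) - 1) \<and>
     (\<forall>j\<in>hd Bs. a j \<bullet> vp = 1) \<and>
     (\<forall>j\<in>last Bs. a j \<bullet> vm = 1)"

end

theory Submission imports Defs begin

lemma inter_card:
  fixes Bs :: "nat set list"
  assumes fin: "\<forall>i<length Bs. finite (Bs!i) \<and> card (Bs!i) = d"
    and adj: "\<forall>i. 0 < i \<and> i < length Bs \<longrightarrow> card (Bs!(i-1) \<inter> Bs!i) = d - 1"
  shows "i + m < length Bs \<Longrightarrow> card (\<Inter>l\<in>{i..i+m}. Bs!l) \<ge> d - m"
proof (induction m)
  case 0
  then show ?case using fin by simp
next
  case (Suc m)
  define X where "X = (\<Inter>l\<in>{i..i+m}. Bs!l)"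
  define A where "A = Bs!(i+m)"
  define C where "C = Bs!(i+m+1)"
  have eq: "(\<Inter>l\<in>{i..i+Suc m}. Bs!l) = X \<inter> C"
    unfolding X_def C_def by (auto simp: le_Suc_eq)
  have XA: "X \<subseteq> A" unfolding X_def A_def by auto
  have finA: "finite A" using fin Suc.prems A_def by auto
  have finX: "finite X" using XA finA finite_subset by blast
  have cA: "card A = d" using fin Suc.prems A_def by auto
  have cAC: "card (A \<inter> C) = d - 1" using adj[rule_format, of "i+m+1"] Suc.prems A_def C_def by auto
  have "card (A - C) = card A - card (A \<inter> C)" using finA by (simp add: card_Diff_subset_Int)
  hence dAC: "card (A - C) \<le> 1" using cA cAC by simp
  have "card (X - C) \<le> card (A - C)" using XA finA by (intro card_mono) auto
  moreover have "X = (X \<inter> C) \<union> (X - C)" by auto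
  hence "card X \<le> card (X \<inter> C) + card (X - C)" by (metis card_Un_le)
  moreover have "card X \<ge> d - m" using Suc X_def by simp
  ultimately have "card (X \<inter> C) \<ge> d - Suc m" using dAC by linarith
  thus ?case using eq by simp
qed

lemma inter_ne:
  fixes Bs :: "nat set list"
  assumes fin: "\<forall>i<length Bs. finite (Bs!i) \<and> card (Bs!i) = d"
    and adj: "\<forall>i. 0 < i \<and> i < length Bs \<longrightarrow> card (Bs!(i-1) \<inter> Bs!i) = d - 1"
    and "i + m < length Bs" "m < d"
  obtains j where "\<And>l. i \<le> l \<Longrightarrow> l \<le> i + m \<Longrightarrow> j \<in> Bs!l"
proof -
  have c: "card (\<Inter>l\<in>{i..i+m}. Bs!l) \<ge> d - m" using inter_card[OF fin adj] assms(3) by blast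
  have "(\<Inter>l\<in>{i..i+m}. Bs!l) \<noteq> {}"
  proof
    assume "(\<Inter>l\<in>{i..i+m}. Bs!l) = {}"
    with c have "d - m \<le> 0" by simp
    thus False using assms(4) by simp
  qed
  then obtain j where j: "j \<in> (\<Inter>l\<in>{i..i+m}. Bs!l)" by blast
  show ?thesis
  proof (rule that)
    fix l assume "i \<le> l" "l \<le> i + m"
    thus "j \<in> Bs!l" using j by simp
  qed
qed

lemma chain:
  fixes Bs :: "nat set list" and f :: "nat \<Rightarrow> 'a::metric_space"
  assumes ne: "Bs \<noteq> []"
    and fin: "\<forall>i<length Bs. finite (Bs!i) \<and> card (Bs!i) = d"
    and adj: "\<forall>i. 0 < i \<and> i < length Bs \<longrightarrow> card (Bs!(i-1) \<inter> Bs!i) = d - 1"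
    and d2: "d \<ge> 2"
    and close: "\<forall>i<length Bs. \<forall>j\<in>Bs!i. \<forall>j'\<in>Bs!i. dist (f j) (f j') \<le> \<gamma>"
    and hp: "\<forall>j\<in>hd Bs. dist p (f j) \<le> \<gamma>"
    and lq: "\<forall>j\<in>last Bs. dist (f j) q \<le> \<gamma>"
  shows "dist p q \<le> \<gamma> * (real ((length Bs - 1 - 1) div (d - 1)) + 2)"
proof -
  define k where "k = length Bs - 1"
  define e where "e = d - 1"
  have e1: "e \<ge> 1" using d2 e_def by simp
  have hd0: "hd Bs = Bs!0" using ne by (simp add: hd_conv_nth)
  have lastk: "last Bs = Bs!k" using ne k_def by (simp add: last_conv_nth)
  have C: "t * e \<le> k \<Longrightarrow> \<forall>j\<in>Bs!(t*e). dist p (f j) \<le> \<gamma> * (real t + 1)" for t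
  proof (induction t)
    case 0
    then show ?case using hp hd0 by simp
  next
    case (Suc t)
    have h1: "t * e + e < length Bs"
    proof -
      have "length Bs > 0" using ne by simp
      moreover have "t*e + e \<le> k" using Suc.prems by (simp add: algebra_simps)
      ultimately show "t * e + e < length Bs" using k_def by linarith
    qed
    have h2: "e < d" using e_def d2 by simp
    obtain j' where j': "\<And>l. t*e \<le> l \<Longrightarrow> l \<le> t*e + e \<Longrightarrow> j' \<in> Bs!l"
      using inter_ne[OF fin adj h1 h2] by blast
    have IH: "dist p (f j') \<le> \<gamma> * (real t + 1)" using Suc j'[of "t*e"] by simp
    show ?case
    proof
      fix j assume j: "j \<in> Bs!(Suc t * e)"
      have "Suc t * e < length Bs" using h1 by (simp add: algebra_simps)
      moreover have "j' \<in> Bs!(Suc t * e)" using j'[of "Suc t * e"] by simp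
      ultimately have "dist (f j') (f j) \<le> \<gamma>" using close j by blast
      moreover have "dist p (f j) \<le> dist p (f j') + dist (f j') (f j)" by (rule dist_triangle)
      moreover have "\<gamma> * (real (Suc t) + 1) = \<gamma> * (real t + 1) + \<gamma>" by (simp add: algebra_simps)
      ultimately show "dist p (f j) \<le> \<gamma> * (real (Suc t) + 1)" using IH by linarith
    qed
  qed
  define t where "t = (k - 1) div e"
  show ?thesis
  proof (cases "k = 0")
    case True
    have "card (Bs!0) = d" using fin ne by simp
    hence "Bs!0 \<noteq> {}" using d2 by auto
    then obtain j where "j \<in> Bs!0" by blast
    hence "dist p (f j) \<le> \<gamma>" "dist (f j) q \<le> \<gamma>" using hp lq hd0 lastk True by auto
    moreover have "dist p q \<le> dist p (f j) + dist (f j) q" by (rule dist_triangle)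
    ultimately show ?thesis using True k_def by simp
  next
    case False
    have te: "t * e \<le> k - 1" using t_def by simp
    have "k - 1 < e + (k-1) div e * e" using e1 by (intro dividend_less_div_times) simp
    hence ke: "k - 1 < (t+1) * e" using t_def by (simp add: algebra_simps)
    have kl: "k < length Bs" using k_def ne by simp
    have "t * e + (k - t * e) = k" using te by linarith
    hence h1: "t * e + (k - t * e) < length Bs" using kl by simp
    have "(t+1)*e = t*e + e" by simp
    hence "k \<le> t*e + e" using ke False by linarith
    hence h2: "k - t * e < d" using e_def d2 by linarith
    obtain j' where j': "\<And>l. t*e \<le> l \<Longrightarrow> l \<le> t*e + (k - t*e) \<Longrightarrow> j' \<in> Bs!l"
      using inter_ne[OF fin adj h1 h2] by blast
    have "dist p (f j') \<le> \<gamma> * (real t + 1)" using C[of t] te j'[of "t*e"] by simp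
    moreover have "dist (f j') q \<le> \<gamma>" using lq lastk j'[of k] te by simp
    moreover have "dist p q \<le> dist p (f j') + dist (f j') q" by (rule dist_triangle)
    moreover have "\<gamma> * (real t + 2) = \<gamma> * (real t + 1) + \<gamma>" by (simp add: algebra_simps)
    moreover have "t = (length Bs - 1 - 1) div (d - 1)" using t_def k_def e_def by simp
    ultimately have "dist p q \<le> \<gamma> * (real t + 2)" by linarith
    thus ?thesis using t_def k_def e_def by simp
  qed
qed


lemma convex_polar: "convex (polar S)"
proof -
  have "polar S = (\<Inter>x\<in>S. {y. x \<bullet> y \<le> 1})" unfolding polar_def by auto
  thus ?thesis by (simp add: convex_INT convex_halfspace_le)
qed

lemma facet_lemma:
  fixes a :: "nat \<Rightarrow> real^'d" and v :: "real^'d"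
  assumes vP: "v \<in> polyP a n" and Bn: "B \<subseteq> {..<n}" and cB: "card B = CARD('d)"
    and inj: "inj_on a B" and ind: "independent (a ` B)" and tight: "\<forall>j\<in>B. a j \<bullet> v = 1"
    and affQ: "aff_dim (polar (polyP a n)) = int CARD('d)"
  shows "polar (polyP a n) \<inter> {y. v \<bullet> y = 1} facet_of polar (polyP a n)"
    and "a ` B \<subseteq> polar (polyP a n) \<inter> {y. v \<bullet> y = 1}"
proof -
  let ?Q = "polar (polyP a n)"
  let ?F = "?Q \<inter> {y. v \<bullet> y = 1}"
  show sub: "a ` B \<subseteq> ?F"
  proof
    fix y assume "y \<in> a ` B"
    then obtain j where j: "j \<in> B" "y = a j" by blast
    have "\<forall>x\<in>polyP a n. x \<bullet> a j \<le> 1" using j Bn by (auto simp: polyP_def inner_commute)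
    moreover have "v \<bullet> a j = 1" using tight j by (simp add: inner_commute)
    ultimately show "y \<in> ?F" using j by (simp add: polar_def)
  qed
  have face: "?F face_of ?Q"
  proof (rule face_of_Int_supporting_hyperplane_le)
    show "convex ?Q" by (rule convex_polar)
    fix y assume "y \<in> ?Q" thus "v \<bullet> y \<le> 1" using vP by (simp add: polar_def)
  qed
  have fin: "finite B" using cB by (metis card_ge_0_finite zero_less_card_finite)
  have Bne: "B \<noteq> {}" using cB by auto
  then obtain j0 where j0: "j0 \<in> B" by blast
  have v0: "v \<noteq> 0" using tight j0 by auto
  have ne: "?F \<noteq> {}" using sub j0 by blast
  have "aff_dim ?F \<le> aff_dim {y. v \<bullet> y = 1}" by (rule aff_dim_subset) auto
  also have "\<dots> = int CARD('d) - 1" using v0 by simp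
  finally have le: "aff_dim ?F \<le> int CARD('d) - 1" .
  have na: "\<not> affine_dependent (a ` B)" using ind affine_dependent_imp_dependent by blast
  have "card (a ` B) = CARD('d)" using inj cB by (simp add: card_image)
  hence "aff_dim (a ` B) = int CARD('d) - 1" using aff_dim_affine_independent[OF na] by simp
  moreover have "aff_dim (a ` B) \<le> aff_dim ?F" using sub by (rule aff_dim_subset)
  ultimately have "aff_dim ?F = int CARD('d) - 1" using le by simp
  thus "?F facet_of ?Q" using face ne affQ by (simp add: facet_of_def)
qed


theorem lemma5p4:
  fixes a :: "nat \<Rightarrow> real^'d" and n :: nat and R \<gamma> :: real
    and c vp vm :: "real^'d"
  assumes "CARD('d) \<ge> 2"
    and "R > 0"
    and "\<gamma> > 0"
    and "minimal_description a n"
    and "bounded (polyP a n)"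
    and "polyP a n \<subseteq> cball 0 R"
    and "0 \<in> interior (polyP a n)"
    and "simple_polytope (polyP a n)"
    and "\<And>F. F facet_of polar (polyP a n) \<Longrightarrow> diameter F \<le> \<gamma>"
    and "c \<in> sphere 0 1"
    and "vp extreme_point_of polyP a n" and "\<forall>x\<in>polyP a n. c \<bullet> x \<le> c \<bullet> vp"
    and "vm extreme_point_of polyP a n" and "\<forall>x\<in>polyP a n. c \<bullet> vm \<le> c \<bullet> x"
  shows "\<not> (\<exists>Bs. simplex_path a n vp vm Bs \<and>
              real (length Bs - 1) < (real CARD('d) - 1) * (2 / (R * \<gamma>) - 2))"
proof
  assume "\<exists>Bs. simplex_path a n vp vm Bs \<and>
              real (length Bs - 1) < (real CARD('d) - 1) * (2 / (R * \<gamma>) - 2)"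
  then obtain Bs where sp: "simplex_path a n vp vm Bs"
    and lt: "real (length Bs - 1) < (real CARD('d) - 1) * (2 / (R * \<gamma>) - 2)" by blast
  let ?P = "polyP a n"
  let ?Q = "polar ?P"
  have d2: "CARD('d) \<ge> 2" and R0: "R > 0" and g0: "\<gamma> > 0" and PR: "?P \<subseteq> cball 0 R"
    and diam: "\<And>F. F facet_of ?Q \<Longrightarrow> diameter F \<le> \<gamma>"
    and c1: "norm c = 1" and vpP: "vp \<in> ?P" and vmP: "vm \<in> ?P"
    and vpmax: "\<forall>x\<in>?P. c \<bullet> x \<le> c \<bullet> vp" and vmmin: "\<forall>x\<in>?P. c \<bullet> vm \<le> c \<bullet> x"
    using assms by (auto simp: extreme_point_of_def)
  obtain \<epsilon> where e0: "\<epsilon> > 0" and eP: "cball 0 \<epsilon> \<subseteq> ?P"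
    using assms(7) mem_interior_cball by blast
  have Qbd: "bounded ?Q"
  proof -
    have "?Q \<subseteq> cball 0 (1/\<epsilon>)"
    proof
      fix y assume yQ: "y \<in> ?Q"
      show "y \<in> cball 0 (1/\<epsilon>)"
      proof (cases "y = 0")
        case True thus ?thesis using e0 by simp
      next
        case False
        define x where "x = (\<epsilon> / norm y) *\<^sub>R y"
        have "norm x = \<epsilon>" using False e0 by (simp add: x_def)
        hence "x \<in> ?P" using eP by auto
        hence "x \<bullet> y \<le> 1" using yQ by (simp add: polar_def)
        moreover have "x \<bullet> y = \<epsilon> * norm y"
          using False by (simp add: x_def power2_norm_eq_inner[symmetric] power2_eq_square)
        ultimately have "\<epsilon> * norm y \<le> 1" by simp
        thus ?thesis using e0 by (simp add: field_simps)
      qed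
    qed
    thus ?thesis using bounded_cball bounded_subset by blast
  qed
  have ballQ: "cball 0 (1/R) \<subseteq> ?Q"
  proof
    fix y :: "real^'d" assume "y \<in> cball 0 (1/R)"
    hence ny: "norm y \<le> 1/R" by simp
    have "\<forall>x\<in>?P. x \<bullet> y \<le> 1"
    proof
      fix x assume "x \<in> ?P"
      hence nx: "norm x \<le> R" using PR by auto
      have "x \<bullet> y \<le> norm x * norm y" by (rule norm_cauchy_schwarz)
      also have "\<dots> \<le> R * (1/R)" using nx ny R0 by (intro mult_mono) auto
      also have "\<dots> = 1" using R0 by simp
      finally show "x \<bullet> y \<le> 1" .
    qed
    thus "y \<in> ?Q" by (simp add: polar_def)
  qed
  have affQ: "aff_dim ?Q = int CARD('d)"
  proof -
    have "ball 0 (1/R) \<subseteq> interior ?Q"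
      using interior_mono[OF ballQ] by simp
    moreover have "(0::real^'d) \<in> ball 0 (1/R)" using R0 by simp
    ultimately have "interior ?Q \<noteq> {}" by blast
    thus ?thesis using aff_dim_nonempty_interior by fastforce
  qed
  have close: "\<And>F x y. F facet_of ?Q \<Longrightarrow> x \<in> F \<Longrightarrow> y \<in> F \<Longrightarrow> dist x y \<le> \<gamma>"
  proof -
    fix F x y assume F: "F facet_of ?Q" and "x \<in> F" "y \<in> F"
    have "F \<subseteq> ?Q" using F by (simp add: facet_of_def face_of_imp_subset)
    hence "bounded F" using Qbd bounded_subset by blast
    hence "dist x y \<le> diameter F" using \<open>x \<in> F\<close> \<open>y \<in> F\<close> by (rule diameter_bounded_bound)
    thus "dist x y \<le> \<gamma>" using diam[OF F] by simp
  qed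
  have ne: "Bs \<noteq> []" and fb: "\<forall>i<length Bs. feasible_basis a n (Bs!i)"
    and adj: "\<forall>i. 0 < i \<and> i < length Bs \<longrightarrow> card (Bs!(i-1) \<inter> Bs!i) = CARD('d) - 1"
    and hdt: "\<forall>j\<in>hd Bs. a j \<bullet> vp = 1" and lt': "\<forall>j\<in>last Bs. a j \<bullet> vm = 1"
    using sp by (auto simp: simplex_path_def)
  have fin: "\<forall>i<length Bs. finite (Bs!i) \<and> card (Bs!i) = CARD('d)"
  proof (intro allI impI)
    fix i assume "i < length Bs"
    hence "card (Bs!i) = CARD('d)" using fb by (simp add: feasible_basis_def)
    thus "finite (Bs!i) \<and> card (Bs!i) = CARD('d)" using d2 by (metis card.infinite not_numeral_le_zero)
  qed
  have closeB: "\<forall>i<length Bs. \<forall>j\<in>Bs!i. \<forall>j'\<in>Bs!i. dist (a j) (a j') \<le> \<gamma>"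
  proof (intro allI impI ballI)
    fix i j j' assume i: "i < length Bs" and j: "j \<in> Bs!i" and j': "j' \<in> Bs!i"
    have "feasible_basis a n (Bs!i)" using fb i by simp
    then obtain v where B: "Bs!i \<subseteq> {..<n}" "card (Bs!i) = CARD('d)" "inj_on a (Bs!i)"
      "independent (a ` (Bs!i))" and v: "v extreme_point_of ?P" "\<forall>j\<in>Bs!i. a j \<bullet> v = 1"
      unfolding feasible_basis_def by blast
    have vP: "v \<in> ?P" using v by (simp add: extreme_point_of_def)
    note FL = facet_lemma[OF vP B v(2) affQ]
    show "dist (a j) (a j') \<le> \<gamma>" using close[OF FL(1)] FL(2) j j' by blast
  qed
  have hd0: "hd Bs = Bs!0" using ne by (simp add: hd_conv_nth)
  have lastk: "last Bs = Bs!(length Bs - 1)" using ne by (simp add: last_conv_nth)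
  have FB0: "feasible_basis a n (hd Bs)" using fb ne hd0 by simp
  have FBk: "feasible_basis a n (last Bs)" using fb ne lastk by simp
  define cp where "cp = c \<bullet> vp"
  define cm where "cm = c \<bullet> vm"
  have ecP: "\<epsilon> *\<^sub>R c \<in> ?P" "(- \<epsilon>) *\<^sub>R c \<in> ?P" using eP e0 c1 by auto
  have cc: "c \<bullet> c = 1" using c1 by (simp add: power2_norm_eq_inner[symmetric])
  have "c \<bullet> (\<epsilon> *\<^sub>R c) \<le> c \<bullet> vp" using vpmax ecP(1) by blast
  hence cpe: "cp \<ge> \<epsilon>" using cc by (simp add: cp_def)
  have "c \<bullet> vm \<le> c \<bullet> ((- \<epsilon>) *\<^sub>R c)" using vmmin ecP(2) by blast
  hence cme: "cm \<le> - \<epsilon>" using cc by (simp add: cm_def)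
  have cpR: "cp \<le> R"
  proof -
    have "cp \<le> norm c * norm vp" unfolding cp_def by (rule norm_cauchy_schwarz)
    also have "\<dots> \<le> R" using c1 PR vpP by auto
    finally show ?thesis .
  qed
  have cmR: "- cm \<le> R"
  proof -
    have "(- c) \<bullet> vm \<le> norm (- c) * norm vm" by (rule norm_cauchy_schwarz)
    also have "\<dots> \<le> R" using c1 PR vmP by auto
    finally show ?thesis by (simp add: cm_def)
  qed
  define p0 where "p0 = (1 / cp) *\<^sub>R c"
  define pk where "pk = (1 / cm) *\<^sub>R c"
  have p0Q: "p0 \<in> ?Q \<inter> {y. vp \<bullet> y = 1}"
  proof -
    have "\<forall>x\<in>?P. x \<bullet> p0 \<le> 1"
    proof
      fix x assume "x \<in> ?P"
      hence "c \<bullet> x \<le> cp" using vpmax cp_def by simp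
      thus "x \<bullet> p0 \<le> 1" using cpe e0 by (simp add: p0_def inner_commute divide_simps)
    qed
    moreover have "vp \<bullet> p0 = 1" using cpe e0 by (simp add: p0_def cp_def inner_commute)
    ultimately show ?thesis by (simp add: polar_def)
  qed
  have pkQ: "pk \<in> ?Q \<inter> {y. vm \<bullet> y = 1}"
  proof -
    have "\<forall>x\<in>?P. x \<bullet> pk \<le> 1"
    proof
      fix x assume "x \<in> ?P"
      hence "cm \<le> c \<bullet> x" using vmmin cm_def by simp
      thus "x \<bullet> pk \<le> 1" using cme e0 by (simp add: pk_def inner_commute divide_simps)
    qed
    moreover have "vm \<bullet> pk = 1" using cme e0 by (simp add: pk_def cm_def inner_commute)
    ultimately show ?thesis by (simp add: polar_def)
  qed
  have hp: "\<forall>j\<in>hd Bs. dist p0 (a j) \<le> \<gamma>"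
  proof
    fix j assume j: "j \<in> hd Bs"
    obtain B: "hd Bs \<subseteq> {..<n}" "card (hd Bs) = CARD('d)" "inj_on a (hd Bs)"
      "independent (a ` (hd Bs))" using FB0 unfolding feasible_basis_def by blast
    note FL = facet_lemma[OF vpP B hdt affQ]
    show "dist p0 (a j) \<le> \<gamma>" using close[OF FL(1)] FL(2) j p0Q by blast
  qed
  have lq: "\<forall>j\<in>last Bs. dist (a j) pk \<le> \<gamma>"
  proof
    fix j assume j: "j \<in> last Bs"
    obtain B: "last Bs \<subseteq> {..<n}" "card (last Bs) = CARD('d)" "inj_on a (last Bs)"
      "independent (a ` (last Bs))" using FBk unfolding feasible_basis_def by blast
    note FL = facet_lemma[OF vmP B lt' affQ]
    show "dist (a j) pk \<le> \<gamma>" using close[OF FL(1)] FL(2) j pkQ by blast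
  qed
  define t where "t = (length Bs - 1 - 1) div (CARD('d) - 1)"
  have up: "dist p0 pk \<le> \<gamma> * (real t + 2)"
    using chain[OF ne fin adj d2 closeB hp lq] t_def by simp
  have low: "dist p0 pk \<ge> 2 / R"
  proof -
    have "p0 - pk = (1/cp - 1/cm) *\<^sub>R c" by (simp add: p0_def pk_def algebra_simps)
    hence "dist p0 pk = \<bar>1/cp - 1/cm\<bar>" using c1 by (simp add: dist_norm)
    moreover have "1/cp \<ge> 1/R" using cpR cpe e0 by (intro divide_left_mono) auto
    moreover have "1/(-cm) \<ge> 1/R" using cmR cme e0 R0 by (intro divide_left_mono) (auto simp: mult_pos_neg)
    moreover have "1/cp > 0" using cpe e0 by simp
    moreover have "1/(-cm) > 0" using cme e0 by simp
    moreover have "1/(-cm) = - (1/cm)" by simp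
    ultimately show ?thesis by linarith
  qed
  have e: "real (CARD('d) - 1) = real CARD('d) - 1" using d2 by simp
  have tk: "t * (CARD('d) - 1) \<le> length Bs - 1" unfolding t_def
    using div_times_less_eq_dividend[of "length Bs - 1 - 1" "CARD('d) - 1"] by linarith
  have "2 / R \<le> \<gamma> * (real t + 2)" using up low by linarith
  hence "2 / (R * \<gamma>) \<le> real t + 2" using R0 g0 by (simp add: field_simps)
  hence "2 / (R * \<gamma>) - 2 \<le> real t" by linarith
  hence "(real CARD('d) - 1) * (2 / (R * \<gamma>) - 2) \<le> (real CARD('d) - 1) * real t"
    using d2 by (intro mult_left_mono) auto
  also have "\<dots> = real (t * (CARD('d) - 1))" using e by simp
  also have "\<dots> \<le> real (length Bs - 1)" using tk by linarith
  finally show False using lt by linarith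
qed

end
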